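(* Let $\mathbb G=V_1\times V_2$ be a step-two Carnot group of rank $r$, let $n\geq r$ be an integer and $\pi:\mathbb F_n\to\mathbb G$ a surjective Carnot morphism. Then the real vector spaces $\mathcal A(V_1\times V_2)$ and $\oplus_{k=n-2}^n\Lambda^k(\pi)$ are isomorphic.
   Context: A step-two Carnot group is $\mathbb G=V_1\times V_2$ ($V_1,V_2$ finite-dimensional real vector spaces, $V_2\ne\{0\}$) with a bilinear skew-symmetric $[\cdot,\cdot]:V_1\times V_1\to V_2$ whose image spans $V_2$, and group law $(x,z)\cdot(x',z')=(x+x',z+z'+[x,x'])$; its rank is $\dim V_1$. $\mathcal A(V_1\times V_2)$ is the space of real-valued maps affine in the usual sense on the vector space $V_1\times V_2$. $\mathbb F_n=\Lambda^1(\mathbb R^n)\times\Lambda^2(\mathbb R^n)$ with bracket $[\theta,\theta']=\theta\wedge\theta'$. A Carnot morphism $\pi:\mathbb G\to\mathbb G'$ is $\pi(x,z)=(\pi_1(x),\pi_2(z))$ with $\pi_1,\pi_2$ linear and $\pi_2([x,y])=[\pi_1(x),\pi_1(y)]'$. For $\eta\in\Lambda^k(\mathbb R^n)$, $\operatorname{Anh}^{1,2}_\wedge\eta:=\{(\theta,\omega)\in\mathbb F_n:\theta\wedge\eta=0,\ \omega\wedge\eta=0\}$ and $\Lambda^k(\pi):=\{\eta\in\Lambda^k(\mathbb R^n):\ker\pi\subset\operatorname{Anh}^{1,2}_\wedge\eta\}$. *)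

theory Defs
  imports "HOL-Analysis.Analysis"
begin

text \<open>Exterior algebra of R^n, with n = CARD('n) and the standard basis of (R^n)^*
indexed by the elements of the finite linearly ordered type 'n.  A form is the vector of
its coefficients in the basis e_I = e_{i_1} wedge ... wedge e_{i_k} (i_1 < ... < i_k),
indexed by the subset I.\<close>

type_synonym 'n form = "real ^ ('n set)"

definition shuffle_sign :: "'n::linorder set \<Rightarrow> 'n set \<Rightarrow> real" where
  "shuffle_sign I J = (-1) ^ card {(i, j). i \<in> I \<and> j \<in> J \<and> j < i}"

definition wedge :: "('n::{finite,linorder}) form \<Rightarrow> 'n form \<Rightarrow> 'n form" (infixr "\<and>\<^sub>w" 70) where
  "wedge \<alpha> \<beta> = (\<chi> S. \<Sum>I\<in>Pow S. shuffle_sign I (S - I) * (\<alpha> $ I) * (\<beta> $ (S - I)))"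

definition Lam :: "nat \<Rightarrow> ('n::{finite,linorder}) form set" where
  "Lam k = {\<eta>. \<forall>S. card S \<noteq> k \<longrightarrow> \<eta> $ S = 0}"

text \<open>Step-two Carnot group V1 x V2 given by a bracket.\<close>
definition step2_bracket :: "('a::euclidean_space \<Rightarrow> 'a \<Rightarrow> 'b::euclidean_space) \<Rightarrow> bool" where
  "step2_bracket br \<longleftrightarrow> bilinear br \<and> (\<forall>x y. br x y = - br y x)
     \<and> span (range (\<lambda>(x, y). br x y)) = UNIV"

text \<open>Carnot morphism F_n \<rightarrow> G, (theta, omega) \<mapsto> (pi1 theta, pi2 omega).
The linear components are given as linear maps on the ambient coefficient space; only
their restrictions to Lambda^1 and Lambda^2 matter.\<close>
definition carnot_morphism_Fn ::
  "('a::euclidean_space \<Rightarrow> 'a \<Rightarrow> 'b::euclidean_space) \<Rightarrow>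
   (('n::{finite,linorder}) form \<Rightarrow> 'a) \<Rightarrow> ('n form \<Rightarrow> 'b) \<Rightarrow> bool" where
  "carnot_morphism_Fn br p1 p2 \<longleftrightarrow> linear p1 \<and> linear p2 \<and>
     (\<forall>\<theta>\<in>Lam 1. \<forall>\<theta>'\<in>Lam 1. p2 (\<theta> \<and>\<^sub>w \<theta>') = br (p1 \<theta>) (p1 \<theta>'))"

definition surjective_Fn :: "(('n::{finite,linorder}) form \<Rightarrow> 'a) \<Rightarrow> ('n form \<Rightarrow> 'b) \<Rightarrow> bool" where
  "surjective_Fn p1 p2 \<longleftrightarrow> p1 ` Lam 1 = UNIV \<and> p2 ` Lam 2 = UNIV"

definition ker_Fn :: "(('n::{finite,linorder}) form \<Rightarrow> 'a::zero) \<Rightarrow> ('n form \<Rightarrow> 'b::zero)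
     \<Rightarrow> ('n form \<times> 'n form) set" where
  "ker_Fn p1 p2 = {(\<theta>, \<omega>). \<theta> \<in> Lam 1 \<and> \<omega> \<in> Lam 2 \<and> p1 \<theta> = 0 \<and> p2 \<omega> = 0}"

definition Anh12 :: "('n::{finite,linorder}) form \<Rightarrow> ('n form \<times> 'n form) set" where
  "Anh12 \<eta> = {(\<theta>, \<omega>). \<theta> \<in> Lam 1 \<and> \<omega> \<in> Lam 2 \<and> \<theta> \<and>\<^sub>w \<eta> = 0 \<and> \<omega> \<and>\<^sub>w \<eta> = 0}"

definition Lam_pi :: "nat \<Rightarrow> (('n::{finite,linorder}) form \<Rightarrow> 'a::zero) \<Rightarrow> ('n form \<Rightarrow> 'b::zero)
     \<Rightarrow> 'n form set" where
  "Lam_pi k p1 p2 = {\<eta> \<in> Lam k. ker_Fn p1 p2 \<subseteq> Anh12 \<eta>}"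

definition affine_maps :: "('v::real_vector \<Rightarrow> real) set" where
  "affine_maps = {f. \<exists>l c. linear l \<and> (\<forall>p. f p = l p + c)}"

definition iso_funs_forms :: "('v \<Rightarrow> real) set \<Rightarrow> ('n::{finite,linorder}) form set \<Rightarrow> bool" where
  "iso_funs_forms A D \<longleftrightarrow> (\<exists>\<Phi>. bij_betw \<Phi> A D \<and>
     (\<forall>f\<in>A. \<forall>g\<in>A. \<Phi> (\<lambda>p. f p + g p) = \<Phi> f + \<Phi> g) \<and>
     (\<forall>f\<in>A. \<forall>c::real. \<Phi> (\<lambda>p. c * f p) = c *\<^sub>R \<Phi> f))"

end

theory Submission imports Defs begin

abbreviation ee :: "'n set \<Rightarrow> ('n::{finite,linorder}) form" where "ee A \<equiv> axis A 1"

lemma wedge_nth: "(\<alpha> \<and>\<^sub>w \<beta>) $ S = (\<Sum>I\<in>Pow S. shuffle_sign I (S - I) * (\<alpha> $ I) * (\<beta> $ (S - I)))"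
  by (simp add: wedge_def)

lemma wedge_add_right: "\<alpha> \<and>\<^sub>w (\<beta> + \<gamma>) = \<alpha> \<and>\<^sub>w \<beta> + \<alpha> \<and>\<^sub>w \<gamma>"
  by (simp add: vec_eq_iff wedge_nth algebra_simps sum.distrib)
lemma wedge_scale_right: "\<alpha> \<and>\<^sub>w (c *\<^sub>R \<beta>) = c *\<^sub>R (\<alpha> \<and>\<^sub>w \<beta>)"
  by (simp add: vec_eq_iff wedge_nth algebra_simps sum_distrib_left)
lemma wedge_zero_right[simp]: "\<alpha> \<and>\<^sub>w 0 = 0"
  by (simp add: vec_eq_iff wedge_nth)
lemma wedge_zero_left[simp]: "0 \<and>\<^sub>w \<alpha> = 0"
  by (simp add: vec_eq_iff wedge_nth)
lemma linear_wedge_right: "linear (\<lambda>\<beta>. \<alpha> \<and>\<^sub>w \<beta>)"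
  by (rule linearI) (simp_all add: wedge_add_right wedge_scale_right)

lemma card_le_n: "card (S::'n::finite set) \<le> CARD('n)"
  by (simp add: card_mono)

lemma wedge_Lam: assumes "\<alpha> \<in> Lam a" "\<beta> \<in> Lam b" shows "\<alpha> \<and>\<^sub>w \<beta> \<in> Lam (a+b)"
  unfolding Lam_def
proof (intro CollectI allI impI)
  fix S :: "'a set" assume S: "card S \<noteq> a + b"
  have "shuffle_sign I (S - I) * (\<alpha> $ I) * (\<beta> $ (S - I)) = 0" if "I \<in> Pow S" for I
  proof (cases "\<alpha> $ I = 0 \<or> \<beta> $ (S - I) = 0")
    case False
    then have "card I = a" "card (S - I) = b" using assms by (auto simp: Lam_def)
    moreover have "card S = card I + card (S - I)" using that
      by (simp add: card_Diff_subset card_mono)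
    ultimately show ?thesis using S by simp
  qed auto
  then show "(\<alpha> \<and>\<^sub>w \<beta>) $ S = 0" unfolding wedge_nth by (intro sum.neutral) blast
qed

lemma Lam_big: assumes "x \<in> Lam m" "m > CARD('n)" shows "x = (0::'n::{finite,linorder} form)"
proof -
  have "x $ S = 0" for S using assms card_le_n[of S] unfolding Lam_def by auto
  then show ?thesis by (simp add: vec_eq_iff)
qed

lemma Lam_top: assumes "x \<in> Lam (CARD('n))" "x $ UNIV = 0" shows "x = (0::'n::{finite,linorder} form)"
proof -
  have "x $ S = 0" for S
  proof (cases "card S = CARD('n)")
    case True then have "S = UNIV" by (simp add: card_eq_UNIV_imp_eq_UNIV)
    then show ?thesis using assms by simp
  qed (use assms in \<open>auto simp: Lam_def\<close>)
  then show ?thesis by (simp add: vec_eq_iff)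
qed

lemma subspace_Lam: "subspace (Lam k)"
  by (auto simp: subspace_def Lam_def)

lemma ss_sq: "shuffle_sign I J * shuffle_sign I J = 1"
  by (simp add: shuffle_sign_def flip: power_add)

lemma ss_nz: "shuffle_sign I J \<noteq> 0"
  using ss_sq[of I J] by auto

lemma UNIV_diff: "UNIV - X = - X" by auto

lemma axis_nth': "axis i x $ j = (if j = i then x else 0)"
  by (simp add: axis_def)

lemma card_compl: "card (- (A::'n::finite set)) = CARD('n) - card A"
  by (simp add: Compl_eq_Diff_UNIV card_Diff_subset)

lemma wedge_ee_right: "(\<alpha> \<and>\<^sub>w ee J) $ S = (if J \<subseteq> S then shuffle_sign (S - J) J * \<alpha> $ (S - J) else 0)"
proof -
  have "(\<alpha> \<and>\<^sub>w ee J) $ S = (\<Sum>I\<in>Pow S. if I = S - J \<and> J \<subseteq> S then shuffle_sign I (S - I) * \<alpha> $ I else 0)"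
    unfolding wedge_nth axis_nth'
    by (intro sum.cong refl) auto
  also have "\<dots> = (if J \<subseteq> S then shuffle_sign (S - J) J * \<alpha> $ (S - J) else 0)"
    by (cases "J \<subseteq> S") (auto simp: double_diff)
  finally show ?thesis .
qed

lemma wedge_ee_left: "(ee A \<and>\<^sub>w \<beta>) $ S = (if A \<subseteq> S then shuffle_sign A (S - A) * \<beta> $ (S - A) else 0)"
proof -
  have "(ee A \<and>\<^sub>w \<beta>) $ S = (\<Sum>I\<in>Pow S. if I = A then shuffle_sign I (S - I) * \<beta> $ (S - I) else 0)"
    unfolding wedge_nth axis_nth'
    by (intro sum.cong refl) auto
  also have "\<dots> = (if A \<subseteq> S then shuffle_sign A (S - A) * \<beta> $ (S - A) else 0)"
    by auto
  finally show ?thesis .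
qed

lemma ss_single: "shuffle_sign {i} J = (-1) ^ card {b\<in>J. b < i}"
proof -
  have "{(a, b). a \<in> {i} \<and> b \<in> J \<and> b < a} = (\<lambda>b. (i, b)) ` {b\<in>J. b < i}" by auto
  moreover have "card ((\<lambda>b. (i, b)) ` {b\<in>J. b < i}) = card {b\<in>J. b < i}"
    by (rule card_image) (auto simp: inj_on_def)
  ultimately show ?thesis by (simp add: shuffle_sign_def)
qed

lemma ss_union: assumes "A \<inter> B = {}"
  shows "shuffle_sign (A \<union> B) (J::'n::{finite,linorder} set) = shuffle_sign A J * shuffle_sign B J"
proof -
  have "{(a, b). a \<in> A \<union> B \<and> b \<in> J \<and> b < a} =
        {(a, b). a \<in> A \<and> b \<in> J \<and> b < a} \<union> {(a, b). a \<in> B \<and> b \<in> J \<and> b < a}" by auto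
  moreover have "card (\<dots>) = card {(a, b). a \<in> A \<and> b \<in> J \<and> b < a} + card {(a, b). a \<in> B \<and> b \<in> J \<and> b < a}"
    by (rule card_Un_disjoint) (use assms in auto)
  ultimately show ?thesis by (simp add: shuffle_sign_def power_add)
qed

definition cj :: "'n::{finite,linorder} \<Rightarrow> real" where
  "cj j = - ((-1) ^ card {b. b < j})"

lemma sign_ident:
  fixes i j :: "'n::{finite,linorder}"
  assumes "i \<noteq> j"
  shows "shuffle_sign {i} (- insert j {i}) = cj j * (shuffle_sign (insert j {i}) (- insert j {i}) * shuffle_sign {i} {j})"
proof -
  define R where "R = - insert j {i}"
  define m where "m = card {b\<in>R. b < j}"
  have split: "shuffle_sign (insert j {i}) R = shuffle_sign {j} R * shuffle_sign {i} R"
    using ss_union[of "{j}" "{i}" R] assms by (simp add: insert_commute)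
  have key: "cj j * shuffle_sign {j} R * shuffle_sign {i} {j} = 1"
  proof (cases "i < j")
    case True
    then have "{b. b < j} = insert i {b\<in>R. b < j}" by (auto simp: R_def)
    moreover have "i \<notin> {b\<in>R. b < j}" by (simp add: R_def)
    ultimately have "card {b. b < j} = Suc m" by (simp add: m_def)
    moreover have "shuffle_sign {i} {j} = 1"
    proof -
      have "{b\<in>{j}. b < i} = {}" using True by auto
      then show ?thesis by (simp only: ss_single) simp
    qed
    ultimately show ?thesis by (simp add: cj_def ss_single m_def flip: power_add)
  next
    case False
    then have "j < i" using assms by auto
    then have "{b. b < j} = {b\<in>R. b < j}" using False by (auto simp: R_def)
    then have "card {b. b < j} = m" by (simp add: m_def)
    moreover have "shuffle_sign {i} {j} = -1"
    proof -
      have "{b\<in>{j}. b < i} = {j}" using \<open>j < i\<close> by auto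
      then show ?thesis by (simp only: ss_single) simp
    qed
    ultimately show ?thesis by (simp add: cj_def ss_single m_def flip: power_add)
  qed
  show ?thesis unfolding R_def[symmetric] split
    using key by (simp add: algebra_simps)
qed

lemma key_wedge:
  fixes \<theta> \<eta> :: "'n::{finite,linorder} form"
  assumes th: "\<theta> \<in> Lam 1"
  shows "(\<theta> \<and>\<^sub>w \<eta>) $ (- {j}) = cj j * ((\<theta> \<and>\<^sub>w ee {j}) \<and>\<^sub>w \<eta>) $ UNIV"
proof -
  define g where "g I = shuffle_sign I (UNIV - I) * (\<theta> \<and>\<^sub>w ee {j}) $ I * \<eta> $ (UNIV - I)" for I
  have "((\<theta> \<and>\<^sub>w ee {j}) \<and>\<^sub>w \<eta>) $ UNIV = (\<Sum>I\<in>UNIV. g I)"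
    by (simp add: wedge_nth g_def)
  also have "\<dots> = (\<Sum>I\<in>insert j ` Pow (- {j}). g I)"
  proof (rule sum.mono_neutral_right)
    show "\<forall>I\<in>UNIV - insert j ` Pow (- {j}). g I = 0"
    proof
      fix I assume a: "I \<in> UNIV - insert j ` Pow (- {j})"
      have "j \<notin> I"
      proof
        assume "j \<in> I"
        then have "I = insert j (I - {j})" by auto
        moreover have "I - {j} \<in> Pow (- {j})" by auto
        ultimately show False using a by blast
      qed
      then show "g I = 0" by (simp add: g_def wedge_ee_right)
    qed
  qed auto
  also have "\<dots> = (\<Sum>A\<in>Pow (- {j}). g (insert j A))"
    by (subst sum.reindex) (auto simp: inj_on_def)
  finally have R: "((\<theta> \<and>\<^sub>w ee {j}) \<and>\<^sub>w \<eta>) $ UNIV = (\<Sum>A\<in>Pow (- {j}). g (insert j A))" .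
  have "(\<theta> \<and>\<^sub>w \<eta>) $ (- {j}) = (\<Sum>A\<in>Pow (- {j}). cj j * g (insert j A))"
    unfolding wedge_nth
  proof (intro sum.cong refl)
    fix A assume A: "A \<in> Pow (- {j})"
    then have jA: "j \<notin> A" by auto
    have e1: "insert j A - {j} = A" using jA by auto
    have e2: "UNIV - insert j A = - {j} - A" by auto
    show "shuffle_sign A (- {j} - A) * \<theta> $ A * \<eta> $ (- {j} - A) = cj j * g (insert j A)"
    proof (cases "\<theta> $ A = 0")
      case False
      then have "card A = 1" using th by (auto simp: Lam_def)
      then obtain i where Ai: "A = {i}" by (auto simp: card_1_singleton_iff)
      then have ij: "i \<noteq> j" using jA by auto
      have e3: "- {j} - {i} = - insert j {i}" by auto
      have e4: "insert j {i} - {j} = {i}" using ij by auto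
      show ?thesis using sign_ident[OF ij]
        by (simp add: g_def wedge_ee_right Ai e3 e4 UNIV_diff)
    qed (simp add: g_def wedge_ee_right e1 e2)
  qed
  also have "\<dots> = cj j * ((\<theta> \<and>\<^sub>w ee {j}) \<and>\<^sub>w \<eta>) $ UNIV"
    by (simp add: R sum_distrib_left)
  finally show ?thesis .
qed

definition TT :: "nat \<Rightarrow> ('n::{finite,linorder}) form \<Rightarrow> 'n form" where
  "TT k \<eta> = (\<chi> I. if card I = k then shuffle_sign I (- I) * \<eta> $ (- I) else 0)"

lemma linear_TT: "linear (TT k)"
  by (rule linearI) (simp_all add: TT_def vec_eq_iff algebra_simps)

lemma pairing:
  assumes "\<alpha> \<in> Lam k"
  shows "(\<alpha> \<and>\<^sub>w \<eta>) $ UNIV = \<alpha> \<bullet> TT k \<eta>"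
  unfolding wedge_nth inner_vec_def TT_def Pow_UNIV UNIV_diff
  by (intro sum.cong refl) (use assms in \<open>auto simp: Lam_def\<close>)

lemma TT_inj:
  assumes "k \<le> CARD('n)"
  shows "inj_on (TT k) (Lam (CARD('n) - k) :: 'n::{finite,linorder} form set)"
proof -
  have "\<eta> = 0" if "\<eta> \<in> Lam (CARD('n) - k)" "TT k \<eta> = 0" for \<eta> :: "'n form"
  proof -
    have "\<eta> $ J = 0" for J
    proof (cases "card J = CARD('n) - k")
      case True
      then have "card (- J) = k" using assms by (simp add: card_compl)
      then have "(TT k \<eta>) $ (- J) = shuffle_sign (- J) (- (- J)) * \<eta> $ J" by (simp add: TT_def)
      moreover have "(TT k \<eta>) $ (- J) = 0" using that(2) by simp
      ultimately show ?thesis using ss_nz[of "- J" J] by simp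
    qed (use that in \<open>auto simp: Lam_def\<close>)
    then show ?thesis by (simp add: vec_eq_iff)
  qed
  then show ?thesis
    by (subst linear_inj_on_iff_eq_0[OF linear_TT subspace_Lam]) auto
qed

lemma TT_Lam: "TT k \<eta> \<in> Lam k"
  by (simp add: TT_def Lam_def)

lemma TT_surj:
  assumes "k \<le> CARD('n)" "v \<in> Lam k"
  shows "\<exists>\<eta>\<in>Lam (CARD('n) - k). TT k \<eta> = (v :: 'n::{finite,linorder} form)"
proof -
  define \<eta> where "\<eta> = (\<chi> J. if card J = CARD('n) - k then shuffle_sign (- J) J * v $ (- J) else (0::real))"
  have "\<eta> \<in> Lam (CARD('n) - k)" by (simp add: \<eta>_def Lam_def)
  moreover have "TT k \<eta> = v"
  proof -
    have "(TT k \<eta>) $ I = v $ I" for I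
    proof (cases "card I = k")
      case True
      then have "card (- I) = CARD('n) - k" by (simp add: card_compl)
      then show ?thesis using True ss_sq[of I "- I"] by (simp add: TT_def \<eta>_def mult.assoc[symmetric])
    qed (use assms in \<open>auto simp: TT_def Lam_def\<close>)
    then show ?thesis by (simp add: vec_eq_iff)
  qed
  ultimately show ?thesis by blast
qed

lemma subspace_orth:
  fixes A B :: "'a::euclidean_space set"
  assumes "subspace B"
  shows "subspace {y \<in> B. \<forall>x\<in>A. orthogonal x y}"
  using assms unfolding subspace_def orthogonal_def
  by (auto simp: inner_add_right)

lemma rank_nullity:
  fixes p :: "'x::euclidean_space \<Rightarrow> 'y::euclidean_space"
  assumes lp: "linear p" and L: "subspace L"
  shows "dim L = dim {x\<in>L. p x = 0} + dim (p ` L)"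
proof -
  define K where "K = {x\<in>L. p x = 0}"
  define C where "C = {y \<in> L. \<forall>x\<in>K. orthogonal x y}"
  have sK: "subspace K" unfolding K_def using L lp
    by (auto simp: subspace_def linear_add linear_scale linear_0)
  have sC: "subspace C" unfolding C_def by (rule subspace_orth[OF L])
  have d1: "dim C + dim K = dim L"
    unfolding C_def by (rule dim_subspace_orthogonal_to_vectors[OF sK L]) (auto simp: K_def)
  have img: "p ` C = p ` L"
  proof
    show "p ` C \<subseteq> p ` L" by (auto simp: C_def)
    show "p ` L \<subseteq> p ` C"
    proof
      fix z assume "z \<in> p ` L"
      then obtain x where x: "x \<in> L" "z = p x" by auto
      obtain y w where y: "y \<in> span K" and w: "\<And>u. u \<in> span K \<Longrightarrow> orthogonal w u" and xyw: "x = y + w"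
        using orthogonal_subspace_decomp_exists[of K x] by metis
      have yK: "y \<in> K" using y sK by (metis span_eq_iff)
      then have "w = x - y" using xyw by simp
      then have wL: "w \<in> L" using x yK L by (auto simp: K_def subspace_diff)
      have "w \<in> C" unfolding C_def using wL w span_base orthogonal_commute by blast
      moreover have "p w = z" using \<open>w = x - y\<close> x yK lp by (simp add: K_def linear_diff)
      ultimately show "z \<in> p ` C" by blast
    qed
  qed
  have inj: "inj_on p C"
  proof (subst linear_inj_on_iff_eq_0[OF lp sC], intro ballI impI)
    fix x assume "x \<in> C" "p x = 0"
    then have "x \<in> K" "\<forall>u\<in>K. orthogonal u x" by (auto simp: C_def K_def)
    then show "x = 0" by (auto simp: orthogonal_def)
  qed
  have "dim (p ` C) = dim C"
    by (rule dim_image_eq[OF lp]) (metis sC span_eq_iff inj)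
  then show ?thesis using d1 img by (simp add: K_def)
qed

lemma dim_annih:
  fixes p :: "('n::{finite,linorder}) form \<Rightarrow> 'c::euclidean_space"
  assumes lp: "linear p" and sur: "p ` Lam k = UNIV" and kn: "k \<le> CARD('n)"
  shows "dim {\<eta>\<in>Lam (CARD('n) - k). \<forall>\<alpha>\<in>Lam k. p \<alpha> = 0 \<longrightarrow> (\<alpha> \<and>\<^sub>w \<eta>) $ UNIV = 0} = DIM('c)"
proof -
  define U where "U = {\<eta>\<in>Lam (CARD('n) - k). \<forall>\<alpha>\<in>Lam k. p \<alpha> = 0 \<longrightarrow> (\<alpha> \<and>\<^sub>w \<eta>) $ UNIV = 0}"
  define K where "K = {\<alpha>\<in>Lam k. p \<alpha> = 0}"
  have sK: "subspace K" unfolding K_def using subspace_Lam[of k] lp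
    by (auto simp: subspace_def linear_add linear_scale linear_0)
  have U_alt: "U = {\<eta>\<in>Lam (CARD('n) - k). \<forall>\<alpha>\<in>K. orthogonal \<alpha> (TT k \<eta>)}"
    unfolding U_def K_def orthogonal_def by (auto simp: pairing)
  have sU: "subspace U"
    unfolding U_alt using subspace_Lam[of "CARD('n) - k"] linear_TT[of k]
    by (auto simp: subspace_def orthogonal_def linear_add[OF linear_TT] linear_scale[OF linear_TT]
      linear_0[OF linear_TT] inner_add_right)
  have img: "TT k ` U = {v \<in> Lam k. \<forall>\<alpha>\<in>K. orthogonal \<alpha> v}"
  proof
    show "TT k ` U \<subseteq> {v \<in> Lam k. \<forall>\<alpha>\<in>K. orthogonal \<alpha> v}"
      unfolding U_alt using TT_Lam by auto
    show "{v \<in> Lam k. \<forall>\<alpha>\<in>K. orthogonal \<alpha> v} \<subseteq> TT k ` U"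
    proof
      fix v assume v: "v \<in> {v \<in> Lam k. \<forall>\<alpha>\<in>K. orthogonal \<alpha> v}"
      then obtain \<eta> where "\<eta> \<in> Lam (CARD('n) - k)" "TT k \<eta> = v" using TT_surj[OF kn] by blast
      then show "v \<in> TT k ` U" using v unfolding U_alt by auto
    qed
  qed
  have "U \<subseteq> Lam (CARD('n) - k)" by (auto simp: U_def)
  then have "inj_on (TT k) (span U)" using TT_inj[OF kn] sU
    by (metis span_eq_iff inj_on_subset)
  then have "dim (TT k ` U) = dim U" by (rule dim_image_eq[OF linear_TT])
  moreover have "dim {v \<in> Lam k. \<forall>\<alpha>\<in>K. orthogonal \<alpha> v} + dim K = dim (Lam k :: 'n form set)"
    by (rule dim_subspace_orthogonal_to_vectors[OF sK subspace_Lam]) (auto simp: K_def)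
  moreover have "dim (Lam k :: 'n form set) = dim K + dim (p ` Lam k)"
    unfolding K_def by (rule rank_nullity[OF lp subspace_Lam])
  ultimately show ?thesis using img sur by (simp add: U_def dim_UNIV)
qed

lemma Lam_pi_iff:
  assumes "linear p1" "linear p2"
  shows "Lam_pi k p1 p2 = {\<eta>\<in>Lam k. (\<forall>\<theta>\<in>Lam 1. p1 \<theta> = 0 \<longrightarrow> \<theta> \<and>\<^sub>w \<eta> = 0) \<and>
                                     (\<forall>\<omega>\<in>Lam 2. p2 \<omega> = 0 \<longrightarrow> \<omega> \<and>\<^sub>w \<eta> = 0)}"
proof -
  have z: "(0::'a::{finite,linorder} form) \<in> Lam m" for m by (simp add: Lam_def)
  have "ker_Fn p1 p2 \<subseteq> Anh12 \<eta> \<longleftrightarrow> (\<forall>\<theta>\<in>Lam 1. p1 \<theta> = 0 \<longrightarrow> \<theta> \<and>\<^sub>w \<eta> = 0) \<and>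
                                     (\<forall>\<omega>\<in>Lam 2. p2 \<omega> = 0 \<longrightarrow> \<omega> \<and>\<^sub>w \<eta> = 0)" for \<eta>
  proof
    assume a: "ker_Fn p1 p2 \<subseteq> Anh12 \<eta>"
    show "(\<forall>\<theta>\<in>Lam 1. p1 \<theta> = 0 \<longrightarrow> \<theta> \<and>\<^sub>w \<eta> = 0) \<and> (\<forall>\<omega>\<in>Lam 2. p2 \<omega> = 0 \<longrightarrow> \<omega> \<and>\<^sub>w \<eta> = 0)"
    proof (intro conjI ballI impI)
      fix \<theta> assume "\<theta> \<in> Lam 1" "p1 \<theta> = 0"
      then have "(\<theta>, 0) \<in> ker_Fn p1 p2" using z linear_0[OF assms(2)] by (simp add: ker_Fn_def)
      then show "\<theta> \<and>\<^sub>w \<eta> = 0" using a by (auto simp: Anh12_def)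
    next
      fix \<omega> assume "\<omega> \<in> Lam 2" "p2 \<omega> = 0"
      then have "(0, \<omega>) \<in> ker_Fn p1 p2" using z linear_0[OF assms(1)] by (simp add: ker_Fn_def)
      then show "\<omega> \<and>\<^sub>w \<eta> = 0" using a by (auto simp: Anh12_def)
    qed
  qed (auto simp: ker_Fn_def Anh12_def)
  then show ?thesis by (auto simp: Lam_pi_def)
qed

lemma subspace_Lam_pi:
  assumes "linear p1" "linear p2"
  shows "subspace (Lam_pi k p1 p2)"
  unfolding Lam_pi_iff[OF assms] using subspace_Lam[of k]
  by (auto simp: subspace_def wedge_add_right wedge_scale_right)

lemma ee_Lam1: "ee {j} \<in> Lam 1"
  by (auto simp: Lam_def axis_nth')

lemma theta_part:
  fixes \<eta> :: "'n::{finite,linorder} form"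
  assumes cm: "carnot_morphism_Fn br p1 p2" and bil: "bilinear br"
    and n2: "CARD('n) \<ge> 2" and eta: "\<eta> \<in> Lam (CARD('n) - 2)"
    and om: "\<forall>\<omega>\<in>Lam 2. p2 \<omega> = 0 \<longrightarrow> (\<omega> \<and>\<^sub>w \<eta>) $ UNIV = 0"
    and th: "\<theta> \<in> Lam 1" "p1 \<theta> = 0"
  shows "\<theta> \<and>\<^sub>w \<eta> = 0"
proof -
  have W: "\<theta> \<and>\<^sub>w \<eta> \<in> Lam (CARD('n) - 1)"
  proof -
    have "1 + (CARD('n) - 2) = CARD('n) - 1" using n2 by simp
    then show ?thesis using wedge_Lam[OF th(1) eta] by metis
  qed
  have "(\<theta> \<and>\<^sub>w \<eta>) $ S = 0" for S
  proof (cases "card S = CARD('n) - 1")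
    case True
    then have "card (- S) = 1" using n2 by (simp add: card_compl)
    then obtain j where "- S = {j}" by (auto simp: card_1_singleton_iff)
    then have S: "S = - {j}" by (metis boolean_algebra_class.boolean_algebra.double_compl)
    have w2: "\<theta> \<and>\<^sub>w ee {j} \<in> Lam 2" using wedge_Lam[OF th(1) ee_Lam1] by (simp add: numeral_2_eq_2)
    have "p2 (\<theta> \<and>\<^sub>w ee {j}) = br (p1 \<theta>) (p1 (ee {j}))"
      using cm th(1) ee_Lam1[of j] unfolding carnot_morphism_Fn_def by blast
    also have "\<dots> = 0" using th(2) bilinear_lzero[OF bil] by simp
    finally have "((\<theta> \<and>\<^sub>w ee {j}) \<and>\<^sub>w \<eta>) $ UNIV = 0" using om w2 by blast
    then show ?thesis unfolding S key_wedge[OF th(1)] by simp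
  qed (use W in \<open>auto simp: Lam_def\<close>)
  then show ?thesis by (simp add: vec_eq_iff)
qed

lemma affine_iso:
  fixes f :: "('a::euclidean_space \<times> 'b::euclidean_space) \<times> real \<Rightarrow> 'n::{finite,linorder} form"
  assumes lf: "linear f" and im: "f ` UNIV = D" and inj: "inj f"
  shows "iso_funs_forms (affine_maps :: ('a \<times> 'b \<Rightarrow> real) set) D"
proof -
  define G :: "('a \<times> 'b \<Rightarrow> real) \<Rightarrow> ('a \<times> 'b) \<times> real" where
    "G g = ((\<Sum>b\<in>Basis. (g b - g 0) *\<^sub>R b), g 0)" for g
  have inj_G: "inj_on G affine_maps"
  proof (rule inj_onI)
    fix g h assume g: "g \<in> affine_maps" and h: "h \<in> affine_maps" and e: "G g = G h"
    obtain l c where l: "linear l" "\<And>p. g p = l p + c" using g by (auto simp: affine_maps_def)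
    obtain l' c' where l': "linear l'" "\<And>p. h p = l' p + c'" using h by (auto simp: affine_maps_def)
    have c: "c = c'" using e l(2)[of 0] l'(2)[of 0] linear_0[OF l(1)] linear_0[OF l'(1)]
      by (simp add: G_def)
    have e': "(\<Sum>b\<in>Basis. l b *\<^sub>R b) = (\<Sum>b\<in>Basis. l' b *\<^sub>R b)"
      using e linear_0[OF l(1)] linear_0[OF l'(1)] by (simp add: G_def l(2) l'(2))
    have A1: "\<forall>b\<in>Basis. l b = (\<Sum>b\<in>Basis. l' b *\<^sub>R b) \<bullet> b"
      using euclidean_representation_sum[of l "\<Sum>b\<in>Basis. l' b *\<^sub>R b"] e' by blast
    have A2: "\<forall>b\<in>Basis. l' b = (\<Sum>b\<in>Basis. l' b *\<^sub>R b) \<bullet> b"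
      using euclidean_representation_sum[of l' "\<Sum>b\<in>Basis. l' b *\<^sub>R b"] by blast
    have "\<forall>b\<in>Basis. l b = l' b"
    proof
      fix b :: "'a \<times> 'b" assume b: "b \<in> Basis"
      have "l b = (\<Sum>b\<in>Basis. l' b *\<^sub>R b) \<bullet> b" using A1 b by blast
      moreover have "l' b = (\<Sum>b\<in>Basis. l' b *\<^sub>R b) \<bullet> b" using A2 b by blast
      ultimately show "l b = l' b" by (rule trans[OF _ sym])
    qed
    then have "l = l'" using linear_eq_stdbasis[OF l(1) l'(1)] by blast
    then show "g = h" using c l(2) l'(2) by auto
  qed
  have sur_G: "G ` affine_maps = UNIV"
  proof (intro set_eqI iffI)
    fix z :: "('a \<times> 'b) \<times> real"
    obtain w c where z: "z = (w, c)" by (cases z)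
    define g where "g p = w \<bullet> p + c" for p
    have lw: "linear (\<lambda>p. w \<bullet> p)" by (rule bounded_linear.linear[OF bounded_linear_inner_right])
    have "g \<in> affine_maps" unfolding affine_maps_def g_def
      using lw by blast
    moreover have "G g = z"
      by (simp add: G_def g_def z euclidean_representation)
    ultimately show "z \<in> G ` affine_maps" by blast
  qed auto
  have bG: "bij_betw G affine_maps UNIV" using inj_G sur_G by (simp add: bij_betw_def)
  have bf: "bij_betw f UNIV D" using inj im by (simp add: bij_betw_def)
  have "bij_betw (f \<circ> G) affine_maps D" by (rule bij_betw_trans[OF bG bf])
  moreover have "(f \<circ> G) (\<lambda>p. g p + h p) = (f \<circ> G) g + (f \<circ> G) h" for g h
  proof -
    have "((g b + h b) - (g 0 + h 0)) *\<^sub>R b = (g b - g 0) *\<^sub>R b + (h b - h 0) *\<^sub>R b" for b :: "'a \<times> 'b"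
      by (simp add: algebra_simps)
    then have "G (\<lambda>p. g p + h p) = G g + G h"
      unfolding G_def by (simp add: sum.distrib)
    then show ?thesis by (simp add: linear_add[OF lf])
  qed
  moreover have "(f \<circ> G) (\<lambda>p. c * g p) = c *\<^sub>R (f \<circ> G) g" for g c
  proof -
    have "c * g b - c * g 0 = c * (g b - g 0)" for b :: "'a \<times> 'b"
      by (simp add: right_diff_distrib)
    then have "G (\<lambda>p. c * g p) = c *\<^sub>R G g"
      unfolding G_def by (simp add: scaleR_sum_right del: right_diff_distrib)
    then show ?thesis by (simp add: linear_scale[OF lf])
  qed
  ultimately show ?thesis unfolding iso_funs_forms_def by blast
qed

lemma dim_Lam_top: "dim (Lam (CARD('n)) :: ('n::{finite,linorder}) form set) = 1"
proof -
  have "Lam (CARD('n)) = range (\<lambda>c. c *\<^sub>R (ee UNIV :: 'n form))"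
  proof (intro set_eqI iffI)
    fix x :: "'n form" assume x: "x \<in> Lam (CARD('n))"
    have "x = (x $ UNIV) *\<^sub>R ee UNIV"
    proof -
      have "x $ S = ((x $ UNIV) *\<^sub>R (ee UNIV :: 'n form)) $ S" for S
      proof (cases "S = UNIV")
        case False
        then have "card S \<noteq> CARD('n)" using card_eq_UNIV_imp_eq_UNIV[of S] by auto
        then show ?thesis using x False by (simp add: Lam_def axis_nth')
      qed simp
      then show ?thesis unfolding vec_eq_iff by blast
    qed
    then show "x \<in> range (\<lambda>c. c *\<^sub>R ee UNIV)" by blast
  next
    fix x :: "'n form" assume "x \<in> range (\<lambda>c. c *\<^sub>R ee UNIV)"
    then show "x \<in> Lam (CARD('n))" by (auto simp: Lam_def axis_nth')
  qed
  also have "\<dots> = span {ee UNIV}" by (simp add: span_singleton)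
  finally have "dim (Lam (CARD('n)) :: 'n form set) = dim {ee UNIV :: 'n form}" by (simp add: dim_span)
  also have "\<dots> = 1" by (simp add: dim_singleton axis_eq_0_iff)
  finally show ?thesis .
qed

theorem proposition5p10:
  fixes br :: "'a::euclidean_space \<Rightarrow> 'a \<Rightarrow> 'b::euclidean_space"
    and p1 :: "('n::{finite,linorder}) form \<Rightarrow> 'a"
    and p2 :: "'n form \<Rightarrow> 'b"
  assumes "step2_bracket br"
    and "CARD('n) \<ge> DIM('a)"
    and "carnot_morphism_Fn br p1 p2"
    and "surjective_Fn p1 p2"
  shows "iso_funs_forms (affine_maps :: ('a \<times> 'b \<Rightarrow> real) set)
           {a + b + c | a b c. a \<in> Lam_pi (CARD('n) - 2) p1 p2 \<and>
                               b \<in> Lam_pi (CARD('n) - 1) p1 p2 \<and> c \<in> Lam_pi (CARD('n)) p1 p2}"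
proof -
  let ?n = "CARD('n)"
  have bil: "bilinear br" using assms(1) by (simp add: step2_bracket_def)
  have cm: "carnot_morphism_Fn br p1 p2" by fact
  have l1: "linear p1" and l2: "linear p2" using assms(3) by (auto simp: carnot_morphism_Fn_def)
  have s1: "p1 ` Lam 1 = UNIV" and s2: "p2 ` Lam 2 = UNIV" using assms(4) by (auto simp: surjective_Fn_def)
  have n2: "?n \<ge> 2"
  proof (rule ccontr)
    assume "\<not> ?n \<ge> 2"
    then have "\<forall>x\<in>Lam 2. x = (0 :: 'n form)" using Lam_big[where m=2 and 'n='n] by auto
    then have "p2 ` Lam 2 \<subseteq> {0}" using linear_0[OF l2] by auto
    moreover obtain b :: 'b where "b \<in> Basis" using nonempty_Basis by blast
    then have "b \<noteq> 0" by (auto simp: nonzero_Basis)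
    ultimately show False using s2 by auto
  qed
  define U0 where "U0 = Lam_pi ?n p1 p2"
  define U1 where "U1 = Lam_pi (?n - 1) p1 p2"
  define U2 where "U2 = Lam_pi (?n - 2) p1 p2"
  have sU0: "subspace U0" and sU1: "subspace U1" and sU2: "subspace U2"
    unfolding U0_def U1_def U2_def using subspace_Lam_pi[OF l1 l2] by auto
  have U0_Lam: "U0 \<subseteq> Lam ?n" and U1_Lam: "U1 \<subseteq> Lam (?n - 1)" and U2_Lam: "U2 \<subseteq> Lam (?n - 2)"
    by (auto simp: U0_def U1_def U2_def Lam_pi_iff[OF l1 l2])
  have "U0 = Lam ?n"
  proof -
    have "\<theta> \<and>\<^sub>w \<eta> = 0" if "\<theta> \<in> Lam 1" "\<eta> \<in> Lam ?n" for \<theta> \<eta> :: "'n form"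
      using Lam_big[OF wedge_Lam[OF that]] by simp
    moreover have "\<omega> \<and>\<^sub>w \<eta> = 0" if "\<omega> \<in> Lam 2" "\<eta> \<in> Lam ?n" for \<omega> \<eta> :: "'n form"
      using Lam_big[OF wedge_Lam[OF that]] by simp
    ultimately show ?thesis by (auto simp: U0_def Lam_pi_iff[OF l1 l2])
  qed
  then have d0: "dim U0 = 1" by (simp add: dim_Lam_top)
  have "U1 = {\<eta>\<in>Lam (?n - 1). \<forall>\<alpha>\<in>Lam 1. p1 \<alpha> = 0 \<longrightarrow> (\<alpha> \<and>\<^sub>w \<eta>) $ UNIV = 0}"
  proof -
    have a: "\<omega> \<and>\<^sub>w \<eta> = 0" if "\<omega> \<in> Lam 2" "\<eta> \<in> Lam (?n - 1)" for \<omega> \<eta> :: "'n form"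
      using Lam_big[OF wedge_Lam[OF that]] n2 by simp
    have b: "\<theta> \<and>\<^sub>w \<eta> = 0 \<longleftrightarrow> (\<theta> \<and>\<^sub>w \<eta>) $ UNIV = 0" if "\<theta> \<in> Lam 1" "\<eta> \<in> Lam (?n - 1)" for \<theta> \<eta> :: "'n form"
    proof -
      have "1 + (?n - 1) = ?n" using n2 by simp
      then have "\<theta> \<and>\<^sub>w \<eta> \<in> Lam ?n" using wedge_Lam[OF that] by metis
      then show ?thesis using Lam_top by auto
    qed
    show ?thesis unfolding U1_def Lam_pi_iff[OF l1 l2] using a b by auto
  qed
  then have d1: "dim U1 = DIM('a)" using dim_annih[OF l1 s1] n2 by simp
  have "U2 = {\<eta>\<in>Lam (?n - 2). \<forall>\<alpha>\<in>Lam 2. p2 \<alpha> = 0 \<longrightarrow> (\<alpha> \<and>\<^sub>w \<eta>) $ UNIV = 0}"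
  proof -
    have b: "\<omega> \<and>\<^sub>w \<eta> = 0 \<longleftrightarrow> (\<omega> \<and>\<^sub>w \<eta>) $ UNIV = 0" if "\<omega> \<in> Lam 2" "\<eta> \<in> Lam (?n - 2)" for \<omega> \<eta> :: "'n form"
    proof -
      have "2 + (?n - 2) = ?n" using n2 by simp
      then have "\<omega> \<and>\<^sub>w \<eta> \<in> Lam ?n" using wedge_Lam[OF that] by metis
      then show ?thesis using Lam_top by auto
    qed
    show ?thesis unfolding U2_def Lam_pi_iff[OF l1 l2]
      using b theta_part[OF cm bil n2] by auto
  qed
  then have d2: "dim U2 = DIM('b)" using dim_annih[OF l2 s2] n2 by simp
  define S12 where "S12 = {x + y | x y. x \<in> U2 \<and> y \<in> U1}"
  have sS12: "subspace S12" unfolding S12_def by (rule subspace_sums[OF sU2 sU1])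
  have i1: "U2 \<inter> U1 \<subseteq> {0}"
  proof
    fix x assume "x \<in> U2 \<inter> U1"
    then have "x \<in> Lam (?n - 2)" "x \<in> Lam (?n - 1)" using U1_Lam U2_Lam by auto
    then have "x $ S = 0" for S using n2 by (cases "card S = ?n - 2") (auto simp: Lam_def)
    then show "x \<in> {0}" by (simp add: vec_eq_iff)
  qed
  have i2: "S12 \<inter> U0 \<subseteq> {0}"
  proof
    fix x assume "x \<in> S12 \<inter> U0"
    then obtain a b where ab: "a \<in> Lam (?n - 2)" "b \<in> Lam (?n - 1)" "x = a + b" and x: "x \<in> Lam ?n"
      using U0_Lam U1_Lam U2_Lam unfolding S12_def by blast
    have "x $ S = 0" for S
    proof (cases "card S = ?n")
      case True
      then show ?thesis using ab n2 by (auto simp: Lam_def)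
    qed (use x in \<open>auto simp: Lam_def\<close>)
    then show "x \<in> {0}" by (simp add: vec_eq_iff)
  qed
  have "dim S12 = DIM('b) + DIM('a)"
    using dim_sums_Int[OF sU2 sU1] i1 d1 d2 unfolding S12_def
    by (simp add: dim_eq_0[THEN iffD2, OF i1])
  define D where "D = {a + b + c | a b c. a \<in> U2 \<and> b \<in> U1 \<and> c \<in> U0}"
  have D_alt: "D = {x + y | x y. x \<in> S12 \<and> y \<in> U0}"
    unfolding D_def S12_def by blast
  have sD: "subspace D" unfolding D_alt by (rule subspace_sums[OF sS12 sU0])
  have dD: "dim D = DIM('b) + DIM('a) + 1"
    using dim_sums_Int[OF sS12 sU0] d0 \<open>dim S12 = _\<close> unfolding D_alt
    by (simp add: dim_eq_0[THEN iffD2, OF i2])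
  have "dim (UNIV :: (('a \<times> 'b) \<times> real) set) = dim D"
    using dD by (simp add: dim_UNIV DIM_prod)
  then obtain f :: "('a \<times> 'b) \<times> real \<Rightarrow> 'n form" where f: "linear f" "f ` UNIV = D" "inj_on f UNIV"
    using subspace_isomorphism[OF subspace_UNIV sD] by blast
  show ?thesis using affine_iso[OF f] unfolding D_def U0_def U1_def U2_def .
qed

end
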